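(* Let $D$ be a linear differential operator of second order that is elliptic at ${\bf z}$, and let ${\bf X}=\{{\bf x}_1,\dots,{\bf x}_N\}$ with ${\bf x}_1={\bf z}$. Then there is no positive numerical differentiation formula $Df({\bf z})\approx\sum_{j=1}^Nw_jf({\bf x}_j)$ that is exact of order $q$ for any $q\ge5$.
   Context: $\Pi^d_q$: real polynomials in $d$ variables of total degree $<q$. $Df=\sum_{|\alpha|\le2}c_\alpha\partial^\alpha f$ with real coefficient functions; $D$ is elliptic at ${\bf z}$ if $\sum_{|\alpha|=2}c_\alpha({\bf z})\xi^\alpha>0$ for all $\xi\in\mathbb{R}^d\setminus\{0\}$. ${\bf X}$ consists of distinct points. A formula with ${\bf x}_1={\bf z}$ is positive if $w_1<0$ and $w_j>0$ for $j=2,\dots,N$. It is exact of order $q$ if $Dp({\bf z})=\sum_jw_jp({\bf x}_j)$ for all $p\in\Pi^d_q$. *)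

theory Defs
  imports "HOL-Analysis.Analysis"
begin

text \<open>Points of R^d are vectors of type real^'n (d = CARD('n)).
  Multi-indices are functions 'n \<Rightarrow> nat; the order of a multi-index is its sum.\<close>

definition mi_order :: "('n::finite \<Rightarrow> nat) \<Rightarrow> nat" where
  "mi_order \<alpha> = sum \<alpha> UNIV"

definition monomial_mi :: "('n::finite \<Rightarrow> nat) \<Rightarrow> real^'n \<Rightarrow> real" where
  "monomial_mi \<alpha> x = (\<Prod>i\<in>UNIV. (x $ i) ^ \<alpha> i)"

definition poly_space :: "nat \<Rightarrow> (real^'n::finite \<Rightarrow> real) set" where
  "poly_space q = {p. \<exists>c :: ('n \<Rightarrow> nat) \<Rightarrow> real.
      p = (\<lambda>x. \<Sum>\<alpha>\<in>{\<alpha>. mi_order \<alpha> < q}. c \<alpha> * monomial_mi \<alpha> x)}"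

definition pdiff :: "'n::finite \<Rightarrow> (real^'n \<Rightarrow> real) \<Rightarrow> real^'n \<Rightarrow> real" where
  "pdiff i f x = deriv (\<lambda>t. f (x + t *\<^sub>R axis i 1)) 0"

text \<open>Higher partial derivative of multi-index alpha (coordinates processed in a fixed
  enumeration of the index type; the order is irrelevant for smooth functions).\<close>
definition coord_list :: "'n::finite list" where
  "coord_list = (SOME xs. distinct xs \<and> set xs = UNIV)"

definition pdiff_mi :: "('n::finite \<Rightarrow> nat) \<Rightarrow> (real^'n \<Rightarrow> real) \<Rightarrow> real^'n \<Rightarrow> real" where
  "pdiff_mi \<alpha> f = fold (\<lambda>i g. (pdiff i ^^ \<alpha> i) g) coord_list f"

definition diff_op :: "(('n::finite \<Rightarrow> nat) \<Rightarrow> real^'n \<Rightarrow> real) \<Rightarrow> (real^'n \<Rightarrow> real) \<Rightarrow> real^'n \<Rightarrow> real" where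
  "diff_op c f x = (\<Sum>\<alpha>\<in>{\<alpha>. mi_order \<alpha> \<le> 2}. c \<alpha> x * pdiff_mi \<alpha> f x)"

definition elliptic_at :: "(('n::finite \<Rightarrow> nat) \<Rightarrow> real^'n \<Rightarrow> real) \<Rightarrow> real^'n \<Rightarrow> bool" where
  "elliptic_at c z \<longleftrightarrow>
     (\<forall>\<xi>::real^'n. \<xi> \<noteq> 0 \<longrightarrow> (\<Sum>\<alpha>\<in>{\<alpha>. mi_order \<alpha> = 2}. c \<alpha> z * monomial_mi \<alpha> \<xi>) > 0)"

text \<open>Formula D f(z) ~ sum_{j=1..N} w_j f(x_j), with x_1 = z.\<close>
definition positive_formula :: "nat \<Rightarrow> (nat \<Rightarrow> real) \<Rightarrow> bool" where
  "positive_formula N w \<longleftrightarrow> w 1 < 0 \<and> (\<forall>j\<in>{2..N}. w j > 0)"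

definition exact_of_order ::
  "(('n::finite \<Rightarrow> nat) \<Rightarrow> real^'n \<Rightarrow> real) \<Rightarrow> real^'n \<Rightarrow> nat \<Rightarrow> (nat \<Rightarrow> real^'n) \<Rightarrow> (nat \<Rightarrow> real) \<Rightarrow> nat \<Rightarrow> bool" where
  "exact_of_order c z N X w q \<longleftrightarrow>
     (\<forall>p\<in>poly_space q. diff_op c p z = (\<Sum>j=1..N. w j * p (X j)))"

end

theory Submission
  imports Defs
begin


definition rep :: "real^'n::finite \<Rightarrow> 'k set \<Rightarrow> ('k \<Rightarrow> real) \<Rightarrow> ('k \<Rightarrow> 'n \<Rightarrow> nat) \<Rightarrow> real^'n \<Rightarrow> real" where
  "rep z K a b x = (\<Sum>k\<in>K. a k * (\<Prod>j\<in>UNIV. (x$j - z$j) ^ (b k j)))"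

lemma comp_line: "(x + t *\<^sub>R axis i (1::real)) $ j = x $ j + (if j = i then t else 0)"
  by (simp add: axis_def)

lemma deriv_line:
  fixes x z :: "real^'n::finite" and n :: "'n \<Rightarrow> nat"
  shows "((\<lambda>t. \<Prod>j\<in>UNIV. ((x + t *\<^sub>R axis i 1)$j - z$j)^(n j)) has_real_derivative
     (real (n i) * (x$i - z$i)^(n i - 1) * (\<Prod>j\<in>UNIV-{i}. (x$j-z$j)^(n j)))) (at 0)"
proof -
  have eq: "(\<lambda>t. \<Prod>j\<in>UNIV. ((x + t *\<^sub>R axis i 1)$j - z$j)^(n j))
     = (\<lambda>t. (x$i + t - z$i)^(n i) * (\<Prod>j\<in>UNIV-{i}. (x$j-z$j)^(n j)))"
  proof
    fix t
    show "(\<Prod>j\<in>UNIV. ((x + t *\<^sub>R axis i 1)$j - z$j)^(n j))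
     = (x$i + t - z$i)^(n i) * (\<Prod>j\<in>UNIV-{i}. (x$j-z$j)^(n j))"
      by (simp add: prod.remove[of UNIV i] axis_def)
  qed
  have "((\<lambda>t. (x$i + t - z$i)^(n i) * (\<Prod>j\<in>UNIV-{i}. (x$j-z$j)^(n j))) has_real_derivative
     (real (n i) * (x$i + 0 - z$i)^(n i - 1) * 1 * (\<Prod>j\<in>UNIV-{i}. (x$j-z$j)^(n j)))) (at 0)"
    by (intro derivative_eq_intros) auto
  then show ?thesis unfolding eq by simp
qed

lemma pdiff_rep:
  "pdiff i (rep z K a b) = rep z K (\<lambda>k. a k * real (b k i)) (\<lambda>k. (b k)(i := b k i - 1))"
proof
  fix x
  have d: "((\<lambda>t. rep z K a b (x + t *\<^sub>R axis i 1)) has_real_derivative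
     (\<Sum>k\<in>K. a k * (real (b k i) * (x$i - z$i)^(b k i - 1) * (\<Prod>j\<in>UNIV-{i}. (x$j-z$j)^(b k j))))) (at 0)"
    unfolding rep_def
    by (intro DERIV_sum DERIV_cmult deriv_line)
  have "pdiff i (rep z K a b) x = (\<Sum>k\<in>K. a k * (real (b k i) * (x$i - z$i)^(b k i - 1) * (\<Prod>j\<in>UNIV-{i}. (x$j-z$j)^(b k j))))"
    unfolding pdiff_def using DERIV_imp_deriv[OF d] .
  also have "\<dots> = rep z K (\<lambda>k. a k * real (b k i)) (\<lambda>k. (b k)(i := b k i - 1)) x"
    unfolding rep_def
    by (intro sum.cong refl) (simp add: prod.remove[of UNIV i])
  finally show "pdiff i (rep z K a b) x = rep z K (\<lambda>k. a k * real (b k i)) (\<lambda>k. (b k)(i := b k i - 1)) x" .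
qed

lemma rep_cong: "(\<And>k. k \<in> K \<Longrightarrow> a k = a' k \<and> b k = b' k) \<Longrightarrow> rep z K a b = rep z K a' b'"
  unfolding rep_def by (intro ext sum.cong) auto

definition FF :: "nat \<Rightarrow> nat \<Rightarrow> real" where
  "FF m n = (\<Prod>t<n. real (m - t))"

lemma pdiff_pow_rep:
  "(pdiff i ^^ n) (rep z K a b) = rep z K (\<lambda>k. a k * FF (b k i) n) (\<lambda>k. (b k)(i := b k i - n))"
proof (induction n)
  case 0
  show ?case by (simp add: FF_def)
next
  case (Suc n)
  show ?case
  proof -
    have "(pdiff i ^^ Suc n) (rep z K a b) = pdiff i ((pdiff i ^^ n) (rep z K a b))" by simp
    also have "\<dots> = rep z K (\<lambda>k. a k * FF (b k i) n * real (b k i - n))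
        (\<lambda>k. ((b k)(i := b k i - n))(i := b k i - n - 1))"
      unfolding Suc.IH pdiff_rep by simp
    also have "\<dots> = rep z K (\<lambda>k. a k * FF (b k i) (Suc n)) (\<lambda>k. (b k)(i := b k i - Suc n))"
      by (intro rep_cong conjI) (simp_all add: FF_def)
    finally show ?thesis .
  qed
qed

lemma fold_rep:
  "distinct xs \<Longrightarrow> fold (\<lambda>i g. (pdiff i ^^ \<alpha> i) g) xs (rep z K a b)
   = rep z K (\<lambda>k. a k * (\<Prod>i\<in>set xs. FF (b k i) (\<alpha> i))) (\<lambda>k j. if j \<in> set xs then b k j - \<alpha> j else b k j)"
proof (induction xs arbitrary: a b)
  case Nil
  show ?case by simp
next
  case (Cons i xs)
  then have ni: "i \<notin> set xs" and d: "distinct xs" by auto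
  have "fold (\<lambda>i g. (pdiff i ^^ \<alpha> i) g) (i # xs) (rep z K a b)
     = fold (\<lambda>i g. (pdiff i ^^ \<alpha> i) g) xs (rep z K (\<lambda>k. a k * FF (b k i) (\<alpha> i)) (\<lambda>k. (b k)(i := b k i - \<alpha> i)))"
    by (simp add: pdiff_pow_rep)
  also have "\<dots> = rep z K (\<lambda>k. a k * FF (b k i) (\<alpha> i) * (\<Prod>i'\<in>set xs. FF (((b k)(i := b k i - \<alpha> i)) i') (\<alpha> i')))
      (\<lambda>k j. if j \<in> set xs then ((b k)(i := b k i - \<alpha> i)) j - \<alpha> j else ((b k)(i := b k i - \<alpha> i)) j)"
    by (rule Cons.IH[OF d])
  also have "\<dots> = rep z K (\<lambda>k. a k * (\<Prod>i\<in>set (i#xs). FF (b k i) (\<alpha> i))) (\<lambda>k j. if j \<in> set (i#xs) then b k j - \<alpha> j else b k j)"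
  proof (intro rep_cong conjI)
    fix k
    have "(\<Prod>i'\<in>set xs. FF (((b k)(i := b k i - \<alpha> i)) i') (\<alpha> i')) = (\<Prod>i'\<in>set xs. FF (b k i') (\<alpha> i'))"
      using ni by (intro prod.cong) auto
    then show "a k * FF (b k i) (\<alpha> i) * (\<Prod>i'\<in>set xs. FF (((b k)(i := b k i - \<alpha> i)) i') (\<alpha> i')) = a k * (\<Prod>i\<in>set (i#xs). FF (b k i) (\<alpha> i))"
      using ni by simp
    show "(\<lambda>j. if j \<in> set xs then ((b k)(i := b k i - \<alpha> i)) j - \<alpha> j else ((b k)(i := b k i - \<alpha> i)) j) = (\<lambda>j. if j \<in> set (i#xs) then b k j - \<alpha> j else b k j)"
      using ni by auto
  qed
  finally show ?case .
qed

lemma coord_list: "distinct (coord_list :: 'n::finite list) \<and> set (coord_list :: 'n list) = UNIV"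
proof -
  have "\<exists>xs. distinct xs \<and> set xs = (UNIV::'n set)" using finite_distinct_list[OF finite_class.finite_UNIV] by blast
  then show ?thesis unfolding coord_list_def by (rule someI_ex)
qed

lemma pdiff_mi_rep:
  "pdiff_mi \<alpha> (rep z K a b) = rep z K (\<lambda>k. a k * (\<Prod>i\<in>UNIV. FF (b k i) (\<alpha> i))) (\<lambda>k j. b k j - \<alpha> j)"
proof -
  have c: "distinct (coord_list :: 'n::finite list)" "set (coord_list :: 'n list) = UNIV" using coord_list by auto
  show ?thesis unfolding pdiff_mi_def by (simp add: fold_rep[OF c(1)] c(2))
qed

lemma prod_zero_pow: "(\<Prod>j\<in>(UNIV::'n::finite set). (0::real) ^ (n j)) = (if n = (\<lambda>_. 0) then 1 else 0)"
proof (cases "n = (\<lambda>_. 0)")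
  case True then show ?thesis by simp
next
  case False
  then obtain j where "n j \<noteq> 0" by auto
  then show ?thesis using False by (intro trans[OF prod_zero]) auto
qed

lemma FF_lt: "m < n \<Longrightarrow> FF m n = 0"
  unfolding FF_def by (intro prod_zero) (auto intro!: bexI[of _ m])

lemma FF_pos: "FF m m > 0"
  unfolding FF_def by (intro prod_pos) auto

definition G :: "('n::finite \<Rightarrow> nat) \<Rightarrow> real" where
  "G \<alpha> = (\<Prod>i\<in>UNIV. FF (\<alpha> i) (\<alpha> i))"

lemma G_pos: "G \<alpha> > 0" unfolding G_def by (intro prod_pos) (auto intro: FF_pos)

lemma pdiff_mi_rep_at:
  "pdiff_mi \<alpha> (rep z K a b) z = (\<Sum>k\<in>K. if b k = \<alpha> then a k * G \<alpha> else 0)"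
  unfolding pdiff_mi_rep
  unfolding rep_def
proof (intro sum.cong refl)
  fix k
  show "a k * (\<Prod>i\<in>UNIV. FF (b k i) (\<alpha> i)) * (\<Prod>j\<in>UNIV. (z $ j - z $ j) ^ (b k j - \<alpha> j)) =
         (if b k = \<alpha> then a k * G \<alpha> else 0)"
  proof (cases "b k = \<alpha>")
    case True
    then show ?thesis by (simp add: G_def)
  next
    case False
    show ?thesis
    proof (cases "\<forall>j. b k j \<le> \<alpha> j")
      case True
      with False obtain i where "b k i < \<alpha> i" by (metis le_neq_implies_less ext)
      then have "(\<Prod>i\<in>UNIV. FF (b k i) (\<alpha> i)) = 0" by (intro prod_zero) (auto intro!: bexI[of _ i] FF_lt)
      then show ?thesis using False by simp
    next
      case F2: False
      then have "(\<lambda>j. b k j - \<alpha> j) \<noteq> (\<lambda>_. 0)" by (metis diff_is_0_eq)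
      then have "(\<Prod>j\<in>UNIV. (z $ j - z $ j) ^ (b k j - \<alpha> j)) = 0"
        using prod_zero_pow[of "\<lambda>j. b k j - \<alpha> j"] by simp
      then show ?thesis using False by simp
    qed
  qed
qed



lemma finite_mi: "finite {\<alpha>::'n::finite \<Rightarrow> nat. mi_order \<alpha> < q}"
proof -
  have "{\<alpha>::'n \<Rightarrow> nat. mi_order \<alpha> < q} \<subseteq> PiE UNIV (\<lambda>_. {..<q})"
  proof
    fix \<alpha> :: "'n \<Rightarrow> nat" assume "\<alpha> \<in> {\<alpha>. mi_order \<alpha> < q}"
    then have "sum \<alpha> UNIV < q" by (simp add: mi_order_def)
    moreover have "\<alpha> i \<le> sum \<alpha> UNIV" for i by (rule member_le_sum) auto
    ultimately show "\<alpha> \<in> PiE UNIV (\<lambda>_. {..<q})" by (auto simp: PiE_UNIV_domain intro: le_less_trans)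
  qed
  moreover have "finite (PiE (UNIV::'n set) (\<lambda>_. {..<q}))" by (intro finite_PiE) auto
  ultimately show ?thesis by (rule finite_subset)
qed

lemma poly_gen:
  assumes "finite K" "\<And>k. k \<in> K \<Longrightarrow> mi_order (m k) < q"
  shows "(\<lambda>x. \<Sum>k\<in>K. e k * monomial_mi (m k) x) \<in> (poly_space q :: (real^'n::finite \<Rightarrow> real) set)"
proof -
  let ?S = "{\<alpha>::'n \<Rightarrow> nat. mi_order \<alpha> < q}"
  define c where "c \<gamma> = (\<Sum>k\<in>{k\<in>K. m k = \<gamma>}. e k)" for \<gamma>
  have "(\<lambda>x. \<Sum>k\<in>K. e k * monomial_mi (m k) x) = (\<lambda>x. \<Sum>\<alpha>\<in>?S. c \<alpha> * monomial_mi \<alpha> x)"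
  proof
    fix x :: "real^'n"
    have "(\<Sum>\<alpha>\<in>?S. c \<alpha> * monomial_mi \<alpha> x) = (\<Sum>\<alpha>\<in>?S. \<Sum>k\<in>{k\<in>K. m k = \<alpha>}. e k * monomial_mi (m k) x)"
      unfolding c_def sum_distrib_right by (intro sum.cong refl) auto
    also have "\<dots> = (\<Sum>k\<in>K. e k * monomial_mi (m k) x)"
      by (rule sum.group) (use assms finite_mi in auto)
    finally show "(\<Sum>k\<in>K. e k * monomial_mi (m k) x) = (\<Sum>\<alpha>\<in>?S. c \<alpha> * monomial_mi \<alpha> x)" by simp
  qed
  then show ?thesis unfolding poly_space_def by blast
qed

lemma ps_mono:
  assumes "a \<le> b" "p \<in> poly_space a" shows "p \<in> (poly_space b :: (real^'n::finite \<Rightarrow> real) set)"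
proof -
  obtain c where p: "p = (\<lambda>x. \<Sum>\<alpha>\<in>{\<alpha>::'n\<Rightarrow>nat. mi_order \<alpha> < a}. c \<alpha> * monomial_mi \<alpha> x)"
    using assms(2) unfolding poly_space_def by blast
  show ?thesis unfolding p using poly_gen[of "{\<alpha>::'n\<Rightarrow>nat. mi_order \<alpha> < a}" "\<lambda>\<alpha>. \<alpha>" b c] finite_mi assms(1) by auto
qed

lemma mono_add: "monomial_mi (\<lambda>i. \<alpha> i + \<beta> i) x = monomial_mi \<alpha> x * monomial_mi \<beta> x"
  unfolding monomial_mi_def by (simp add: power_add prod.distrib)

lemma order_add: "mi_order (\<lambda>i. \<alpha> i + \<beta> i) = mi_order \<alpha> + mi_order \<beta>"
  unfolding mi_order_def by (simp add: sum.distrib)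

lemma ps_mult:
  assumes "p \<in> poly_space a" "r \<in> poly_space b" "1 \<le> a" "1 \<le> b"
  shows "(\<lambda>x. p x * r x) \<in> (poly_space (a + b - 1) :: (real^'n::finite \<Rightarrow> real) set)"
proof -
  let ?A = "{\<alpha>::'n\<Rightarrow>nat. mi_order \<alpha> < a}" and ?B = "{\<alpha>::'n\<Rightarrow>nat. mi_order \<alpha> < b}"
  obtain c where p: "p = (\<lambda>x. \<Sum>\<alpha>\<in>?A. c \<alpha> * monomial_mi \<alpha> x)"
    using assms(1) unfolding poly_space_def by blast
  obtain d where r: "r = (\<lambda>x. \<Sum>\<alpha>\<in>?B. d \<alpha> * monomial_mi \<alpha> x)"
    using assms(2) unfolding poly_space_def by blast
  have eq: "(\<lambda>x. p x * r x) = (\<lambda>x. \<Sum>k\<in>?A \<times> ?B. (c (fst k) * d (snd k)) * monomial_mi (\<lambda>i. fst k i + snd k i) x)"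
  proof
    fix x
    show "p x * r x = (\<Sum>k\<in>?A \<times> ?B. (c (fst k) * d (snd k)) * monomial_mi (\<lambda>i. fst k i + snd k i) x)"
      unfolding p r sum_product sum.cartesian_product mono_add
      by (intro sum.cong refl) (auto simp: algebra_simps)
  qed
  show ?thesis unfolding eq
    by (rule poly_gen) (use finite_mi assms(3,4) in \<open>auto simp: order_add\<close>)
qed

lemma ps_zero: "(\<lambda>x. 0) \<in> poly_space q"
  unfolding poly_space_def by (rule CollectI, rule exI[of _ "\<lambda>_. 0"]) simp

lemma ps_add:
  assumes "p \<in> poly_space q" "r \<in> poly_space q"
  shows "(\<lambda>x. p x + r x) \<in> (poly_space q :: (real^'n::finite \<Rightarrow> real) set)"
proof -
  let ?A = "{\<alpha>::'n\<Rightarrow>nat. mi_order \<alpha> < q}"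
  obtain c where p: "p = (\<lambda>x. \<Sum>\<alpha>\<in>?A. c \<alpha> * monomial_mi \<alpha> x)"
    using assms(1) unfolding poly_space_def by blast
  obtain d where r: "r = (\<lambda>x. \<Sum>\<alpha>\<in>?A. d \<alpha> * monomial_mi \<alpha> x)"
    using assms(2) unfolding poly_space_def by blast
  have h: "(\<lambda>x. p x + r x) = (\<lambda>x. \<Sum>\<alpha>\<in>?A. (c \<alpha> + d \<alpha>) * monomial_mi \<alpha> x)"
    unfolding p r by (simp add: sum.distrib distrib_right)
  show ?thesis unfolding poly_space_def by (rule CollectI, rule exI[of _ "\<lambda>\<alpha>. c \<alpha> + d \<alpha>"], rule h)
qed

lemma ps_sum:
  assumes "finite I" "\<And>i. i \<in> I \<Longrightarrow> f i \<in> poly_space q"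
  shows "(\<lambda>x. \<Sum>i\<in>I. f i x) \<in> (poly_space q :: (real^'n::finite \<Rightarrow> real) set)"
  using assms
proof (induction I rule: finite_induct)
  case empty then show ?case by (simp add: ps_zero)
next
  case (insert i I)
  then show ?case using ps_add[of "f i" q "\<lambda>x. \<Sum>i\<in>I. f i x"] by simp
qed

lemma ps_coord: "(\<lambda>x. x$i - z$i) \<in> (poly_space 2 :: (real^'n::finite \<Rightarrow> real) set)"
proof -
  define m :: "bool \<Rightarrow> 'n \<Rightarrow> nat" where "m b = (if b then (\<lambda>j. if j = i then 1 else 0) else (\<lambda>_. 0))" for b
  define e :: "bool \<Rightarrow> real" where "e b = (if b then 1 else - (z$i))" for b
  have mono1: "monomial_mi (\<lambda>j. if j = i then 1 else 0) x = x$i" for x :: "real^'n"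
  proof -
    have "(\<Prod>j\<in>UNIV. x$j ^ (if j = i then 1 else 0)) = (\<Prod>j\<in>UNIV. if j = i then x$i else 1)"
      by (rule prod.cong) auto
    then show ?thesis unfolding monomial_mi_def by simp
  qed
  have "(\<lambda>x. x$i - z$i) = (\<lambda>x. \<Sum>k\<in>UNIV. e k * monomial_mi (m k) x)"
    using mono1 by (auto simp: UNIV_bool e_def m_def monomial_mi_def[of "\<lambda>_. 0"])
  moreover have "(\<lambda>x. \<Sum>k\<in>UNIV. e k * monomial_mi (m k) x) \<in> (poly_space 2 :: (real^'n \<Rightarrow> real) set)"
    by (rule poly_gen) (auto simp: m_def mi_order_def)
  ultimately show ?thesis by simp
qed



definition b2 :: "'n::finite \<Rightarrow> 'n \<Rightarrow> nat" where
  "b2 k = (\<lambda>j. if j = k then 2 else 0)"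

lemma order_b2: "mi_order (b2 k) = 2"
  unfolding mi_order_def b2_def by simp

lemma prod_b2: "(\<Prod>j\<in>UNIV. (y j :: real) ^ (b2 k j)) = y k ^ 2"
proof -
  have "(\<Prod>j\<in>UNIV. y j ^ (b2 k j)) = (\<Prod>j\<in>UNIV. if j = k then y k ^ 2 else 1)"
    by (rule prod.cong) (auto simp: b2_def)
  then show ?thesis by simp
qed

definition p2 :: "real^'n::finite \<Rightarrow> real^'n \<Rightarrow> real" where
  "p2 z = rep z UNIV (\<lambda>_. 1) b2"

definition p4 :: "real^'n::finite \<Rightarrow> real^'n \<Rightarrow> real" where
  "p4 z = rep z (UNIV \<times> UNIV) (\<lambda>_. 1) (\<lambda>kl j. b2 (fst kl) j + b2 (snd kl) j)"

lemma p2_eq: "p2 z x = (\<Sum>k\<in>UNIV. (x$k - z$k) * (x$k - z$k))"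
  unfolding p2_def rep_def by (simp add: prod_b2 power2_eq_square)

lemma p4_eq: "p4 z x = p2 z x * p2 z x"
proof -
  have "p4 z x = (\<Sum>kl\<in>UNIV \<times> UNIV. (x$(fst kl) - z$(fst kl))^2 * (x$(snd kl) - z$(snd kl))^2)"
    unfolding p4_def rep_def by (simp add: power_add prod.distrib prod_b2)
  also have "\<dots> = p2 z x * p2 z x"
    unfolding p2_eq sum_product sum.cartesian_product by (simp add: power2_eq_square case_prod_beta)
  finally show ?thesis .
qed

lemma p2_ps: "p2 z \<in> poly_space 3"
proof -
  have "(\<lambda>x. \<Sum>k\<in>UNIV. (x$k - z$k) * (x$k - z$k)) \<in> poly_space 3"
    by (rule ps_sum) (use ps_mult[OF ps_coord ps_coord] in auto)
  moreover have "p2 z = (\<lambda>x. \<Sum>k\<in>UNIV. (x$k - z$k) * (x$k - z$k))" by (rule ext) (rule p2_eq)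
  ultimately show ?thesis by simp
qed

lemma p4_ps: "p4 z \<in> poly_space 5"
proof -
  have "(\<lambda>x. p2 z x * p2 z x) \<in> poly_space (3 + 3 - 1)"
    by (rule ps_mult) (auto simp: p2_ps[unfolded fun_eq_iff])
  then have "(\<lambda>x. p2 z x * p2 z x) \<in> poly_space 5" by simp
  moreover have "p4 z = (\<lambda>x. p2 z x * p2 z x)" by (rule ext) (rule p4_eq)
  ultimately show ?thesis by simp
qed

lemma diff_op_p4: "diff_op c (p4 z) z = 0"
proof -
  have "pdiff_mi \<alpha> (p4 z) z = 0" if "mi_order \<alpha> \<le> 2" for \<alpha> :: "'a \<Rightarrow> nat"
  proof -
    have "(\<lambda>j. b2 (fst kl) j + b2 (snd kl) j) \<noteq> \<alpha>" for kl :: "'a \<times> 'a"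
    proof
      assume "(\<lambda>j. b2 (fst kl) j + b2 (snd kl) j) = \<alpha>"
      then have "mi_order \<alpha> = 4" using order_add[of "b2 (fst kl)" "b2 (snd kl)"] by (simp add: order_b2)
      then show False using that by simp
    qed
    then show ?thesis unfolding p4_def pdiff_mi_rep_at by simp
  qed
  then show ?thesis unfolding diff_op_def by simp
qed

lemma mono_axis:
  assumes "mi_order \<alpha> = 2"
  shows "monomial_mi \<alpha> (axis k 1 :: real^'n::finite) = (if \<alpha> = b2 k then 1 else 0)"
proof (cases "\<alpha> = b2 k")
  case True
  have "(\<Prod>j\<in>UNIV. (axis k 1 $ j :: real) ^ (b2 k j)) = 1"
    by (rule prod.neutral) (auto simp: axis_def b2_def)
  then show ?thesis using True unfolding monomial_mi_def by simp
next
  case False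
  have "\<exists>j. j \<noteq> k \<and> \<alpha> j \<noteq> 0"
  proof (rule ccontr)
    assume "\<not> ?thesis"
    then have z: "\<forall>j. j \<noteq> k \<longrightarrow> \<alpha> j = 0" by auto
    have "mi_order \<alpha> = \<alpha> k + sum \<alpha> (UNIV - {k})" unfolding mi_order_def by (simp add: sum.remove[of UNIV k])
    also have "sum \<alpha> (UNIV - {k}) = 0" using z by (intro sum.neutral) auto
    finally have "\<alpha> k = 2" using assms by simp
    then have "\<alpha> = b2 k" using z unfolding b2_def by auto
    then show False using False by simp
  qed
  then obtain j where "j \<noteq> k" "\<alpha> j \<noteq> 0" by auto
  then have "(\<Prod>j\<in>UNIV. (axis k 1 $ j :: real) ^ (\<alpha> j)) = 0"
    by (intro prod_zero) (auto simp: axis_def intro!: bexI[of _ j])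
  then show ?thesis using False unfolding monomial_mi_def by simp
qed

lemma ell_pos:
  fixes c :: "('n::finite \<Rightarrow> nat) \<Rightarrow> real^'n \<Rightarrow> real"
  assumes "elliptic_at c z"
  shows "c (b2 k) z > 0"
proof -
  have "axis k 1 \<noteq> (0 :: real^'n)" by (simp add: axis_eq_axis[of k 1 k 0, unfolded axis_def] vec_eq_iff axis_def)
  then have "(\<Sum>\<alpha>\<in>{\<alpha>. mi_order \<alpha> = 2}. c \<alpha> z * monomial_mi \<alpha> (axis k 1 :: real^'n)) > 0"
    using assms unfolding elliptic_at_def by blast
  also have "(\<Sum>\<alpha>\<in>{\<alpha>. mi_order \<alpha> = 2}. c \<alpha> z * monomial_mi \<alpha> (axis k 1 :: real^'n))
     = (\<Sum>\<alpha>\<in>{\<alpha>. mi_order \<alpha> = 2}. if \<alpha> = b2 k then c \<alpha> z else 0)"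
    by (intro sum.cong refl) (simp add: mono_axis)
  also have "\<dots> = c (b2 k) z"
  proof -
    have "finite {\<alpha>::'n\<Rightarrow>nat. mi_order \<alpha> = 2}" by (rule finite_subset[OF _ finite_mi[of 3]]) auto
    then show ?thesis by (simp add: sum.delta order_b2)
  qed
  finally show ?thesis .
qed

lemma diff_op_p2:
  assumes "elliptic_at c (z :: real^'n::finite)"
  shows "diff_op c (p2 z) z > 0"
proof -
  let ?A = "{\<alpha>::'n \<Rightarrow> nat. mi_order \<alpha> \<le> 2}"
  have "?A = {\<alpha>. mi_order \<alpha> < 3}" by auto
  then have fA: "finite ?A" using finite_mi[of 3] by simp
  have "diff_op c (p2 z) z = (\<Sum>\<alpha>\<in>?A. \<Sum>k\<in>UNIV. if b2 k = \<alpha> then c \<alpha> z * G \<alpha> else 0)"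
    unfolding diff_op_def p2_def pdiff_mi_rep_at sum_distrib_left
    by (intro sum.cong refl) auto
  also have "\<dots> = (\<Sum>k\<in>UNIV. \<Sum>\<alpha>\<in>?A. if \<alpha> = b2 k then c \<alpha> z * G \<alpha> else 0)"
    by (subst sum.swap) (intro sum.cong refl, auto)
  also have "\<dots> = (\<Sum>k\<in>UNIV. c (b2 k) z * G (b2 k))"
    using fA by (intro sum.cong refl) (simp add: order_b2)
  also have "\<dots> > 0"
    by (intro sum_pos) (auto intro: mult_pos_pos ell_pos[OF assms] G_pos)
  finally show ?thesis .
qed



lemma p2_z: "p2 z z = 0" by (simp add: p2_eq)

lemma p4_pos:
  assumes "x \<noteq> z" shows "p4 z x > 0"
proof -
  obtain k where "x$k \<noteq> z$k" using assms by (auto simp: vec_eq_iff)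
  then have "p2 z x > 0" unfolding p2_eq
  proof (intro sum_pos2[of UNIV k])
    show "0 < (x$k - z$k) * (x$k - z$k)" using \<open>x$k \<noteq> z$k\<close>
      by (cases "x$k > z$k") (auto simp: zero_less_mult_iff)
  qed auto
  then show ?thesis by (simp add: p4_eq)
qed

theorem mainTheorem13:
  fixes c :: "('n::finite \<Rightarrow> nat) \<Rightarrow> real^'n \<Rightarrow> real"
    and z :: "real^'n" and X :: "nat \<Rightarrow> real^'n" and w :: "nat \<Rightarrow> real"
    and N q :: nat
  assumes "elliptic_at c z"
    and "N \<ge> 1"
    and "inj_on X {1..N}"
    and "X 1 = z"
    and "q \<ge> 5"
  shows "\<not> (positive_formula N w \<and> exact_of_order c z N X w q)"
proof
  assume H: "positive_formula N w \<and> exact_of_order c z N X w q"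
  then have wpos: "\<And>j. j \<in> {2..N} \<Longrightarrow> w j > 0" and ex: "\<And>p. p \<in> poly_space q \<Longrightarrow> diff_op c p z = (\<Sum>j=1..N. w j * p (X j))"
    unfolding positive_formula_def exact_of_order_def by auto
  have split: "(\<Sum>j=1..N. w j * p (X j)) = w 1 * p z + (\<Sum>j=2..N. w j * p (X j))" for p
  proof -
    have "{1..N} = insert 1 {2..N}" using assms(2) by auto
    then show ?thesis using assms(4) by simp
  qed
  show False
  proof (cases "N = 1")
    case True
    have "diff_op c (p2 z) z = w 1 * p2 z z"
      using ex[OF ps_mono[OF _ p2_ps]] assms(5) True assms(4) by simp
    then show False using diff_op_p2[OF assms(1)] p2_z[of z] by simp
  next
    case False
    then have N2: "N \<ge> 2" using assms(2) by simp
    have "0 = (\<Sum>j=2..N. w j * p4 z (X j))"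
    proof -
      have "diff_op c (p4 z) z = (\<Sum>j=1..N. w j * p4 z (X j))" using ex[OF ps_mono[OF _ p4_ps]] assms(5) by blast
      then show ?thesis using split[of "p4 z"] diff_op_p4[of c z] p4_eq[of z z] p2_z[of z] by simp
    qed
    moreover have "(\<Sum>j=2..N. w j * p4 z (X j)) > 0"
    proof (rule sum_pos)
      show "finite {2..N}" by simp
      show "{2..N} \<noteq> {}" using N2 by simp
      fix j assume j: "j \<in> {2..N}"
      have "X j \<noteq> X 1" using assms(3) j assms(2) unfolding inj_on_def by force
      then have "p4 z (X j) > 0" using assms(4) by (intro p4_pos) simp
      then show "w j * p4 z (X j) > 0" using wpos[OF j] by simp
    qed
    ultimately show False by simp
  qed
qed

end
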